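(* Let $T$ be a string and $T'$ be obtained from $T$ by a single character edit (insertion, substitution, or deletion) at position $i$. Then every string $x\in \mathcal{N}_1\cup\mathcal{N}_3^{\neg\mathrm{v}}$ occurs in $T$ (i.e. $x\in\mathrm{Substr}(T)$).
   Context: Strings are over an alphabet $\Sigma$; $\mathrm{Substr}(T)$, $\mathrm{Prefix}(T)$, $\mathrm{Suffix}(T)$ are the sets of substrings, prefixes, suffixes of $T$. A string $w\in\mathrm{Substr}(T)$ is left-maximal in $T$ if $w\in\mathrm{Prefix}(T)$ or there exist distinct $a,b\in\Sigma$ with $aw,bw\in\mathrm{Substr}(T)$; right-maximal if $w\in\mathrm{Suffix}(T)$ or there exist distinct $a,b$ with $wa,wb\in\mathrm{Substr}(T)$. $\mathsf{LeftM}(T)$, $\mathsf{RightM}(T)$ denote these sets and $\mathsf{M}(T)=\mathsf{LeftM}(T)\cap\mathsf{RightM}(T)$. Edit setting: $|T|=n$. Insertion: $|T'|=n+1$, $T'[1..i-1]=T[1..i-1]$, $T'[i]$ is the inserted character, $T'[i+1..n+1]=T[i..n]$. Substitution: $|T'|=n$, $T'[i]\ne T[i]$, $T'[j]=T[j]$ for $j\neq i$. Deletion: $T'=T[1..i-1]T[i+1..n]$ (position $i$ of $T'$ is the edited position). A crossing occurrence of a nonempty string $x$ is an occurrence $T'[j..k]=x$ such that, for insertion/substitution, $k=i-1$, or $j\le i\le k$, or $j=i+1$; and for deletion, $k=i-1$, or ($j\le i-1$ and $i\le k$), or $j=i$. $x$ is of Type (v) if (1) $x$ has at least two crossing occurrences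 in $T'$, and (2) if all occurrences of $x$ in $T'$ are crossing occurrences then $x\in\mathsf{M}(T')$. Let $\mathcal{N}=(\mathsf{M}(T')\setminus\mathsf{M}(T))\setminus\{T'\}$, $\mathcal{N}_1=\mathcal{N}\cap\mathsf{RightM}(T)$, $\mathcal{N}_2=\mathcal{N}\cap\mathsf{LeftM}(T)$, $\mathcal{N}_3=\mathcal{N}\setminus(\mathcal{N}_1\cup\mathcal{N}_2)$. Let $\mathcal{N}_3^{\mathrm{v}}$ be the set of $x\in\mathcal{N}_3$ such that $x$ is of Type (v) and every character $a$ with $xa\in\mathrm{Substr}(T')$ is the character immediately following some crossing occurrence of $x$ in $T'$; let $\mathcal{N}_3^{\neg\mathrm{v}}=\mathcal{N}_3\setminus\mathcal{N}_3^{\mathrm{v}}$. *)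

theory Defs
  imports Main
begin

(* Strings are lists over an alphabet 'a; positions are 1-based as in the paper:
   T[p] = T ! (p - 1). *)

definition Substr :: "'a list \<Rightarrow> 'a list set" where
  "Substr T = {x. \<exists>u v. T = u @ x @ v}"

definition Prefix :: "'a list \<Rightarrow> 'a list set" where
  "Prefix T = {x. \<exists>v. T = x @ v}"

definition Suffix :: "'a list \<Rightarrow> 'a list set" where
  "Suffix T = {x. \<exists>u. T = u @ x}"

definition LeftM :: "'a list \<Rightarrow> 'a list set" where
  "LeftM T = {w \<in> Substr T. w \<in> Prefix T \<or>
      (\<exists>a b. a \<noteq> b \<and> a # w \<in> Substr T \<and> b # w \<in> Substr T)}"

definition RightM :: "'a list \<Rightarrow> 'a list set" where
  "RightM T = {w \<in> Substr T. w \<in> Suffix T \<or>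
      (\<exists>a b. a \<noteq> b \<and> w @ [a] \<in> Substr T \<and> w @ [b] \<in> Substr T)}"

definition MaxRep :: "'a list \<Rightarrow> 'a list set" where
  "MaxRep T = LeftM T \<inter> RightM T"

datatype edit_kind = Insertion | Substitution | Deletion

definition single_edit :: "edit_kind \<Rightarrow> 'a list \<Rightarrow> 'a list \<Rightarrow> nat \<Rightarrow> bool" where
  "single_edit k T T' i = (case k of
     Insertion \<Rightarrow> 1 \<le> i \<and> i \<le> length T + 1 \<and> length T' = length T + 1 \<and>
                  take (i - 1) T' = take (i - 1) T \<and> drop i T' = drop (i - 1) T
   | Substitution \<Rightarrow> 1 \<le> i \<and> i \<le> length T \<and> length T' = length T \<and>
                  T' ! (i - 1) \<noteq> T ! (i - 1) \<and>
                  (\<forall>j. 1 \<le> j \<and> j \<le> length T \<and> j \<noteq> i \<longrightarrow> T' ! (j - 1) = T ! (j - 1))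
   | Deletion \<Rightarrow> 1 \<le> i \<and> i \<le> length T \<and> T' = take (i - 1) T @ drop i T)"

definition occ_at :: "'a list \<Rightarrow> 'a list \<Rightarrow> nat \<Rightarrow> bool" where
  "occ_at T' x j = (1 \<le> j \<and> j + length x - 1 \<le> length T' \<and>
                     take (length x) (drop (j - 1) T') = x)"

definition crossing_occ :: "edit_kind \<Rightarrow> 'a list \<Rightarrow> nat \<Rightarrow> 'a list \<Rightarrow> nat \<Rightarrow> bool" where
  "crossing_occ ed T' i x j = (x \<noteq> [] \<and> occ_at T' x j \<and>
     (let k = j + length x - 1 in
      if ed = Deletion then k = i - 1 \<or> (j \<le> i - 1 \<and> i \<le> k) \<or> j = i
      else k = i - 1 \<or> (j \<le> i \<and> i \<le> k) \<or> j = i + 1))"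

definition typeV :: "edit_kind \<Rightarrow> 'a list \<Rightarrow> nat \<Rightarrow> 'a list \<Rightarrow> bool" where
  "typeV ed T' i x = ((\<exists>j1 j2. j1 \<noteq> j2 \<and> crossing_occ ed T' i x j1 \<and> crossing_occ ed T' i x j2) \<and>
     ((\<forall>j. occ_at T' x j \<longrightarrow> crossing_occ ed T' i x j) \<longrightarrow> x \<in> MaxRep T'))"

definition NewM :: "'a list \<Rightarrow> 'a list \<Rightarrow> 'a list set" where
  "NewM T T' = (MaxRep T' - MaxRep T) - {T'}"

definition N1 :: "'a list \<Rightarrow> 'a list \<Rightarrow> 'a list set" where
  "N1 T T' = NewM T T' \<inter> RightM T"

definition N2 :: "'a list \<Rightarrow> 'a list \<Rightarrow> 'a list set" where
  "N2 T T' = NewM T T' \<inter> LeftM T"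

definition N3 :: "'a list \<Rightarrow> 'a list \<Rightarrow> 'a list set" where
  "N3 T T' = NewM T T' - (N1 T T' \<union> N2 T T')"

(* the character immediately following the crossing occurrence starting at j is
   T'[j+|x|] = T' ! (j + |x| - 1) *)
definition N3v :: "edit_kind \<Rightarrow> 'a list \<Rightarrow> 'a list \<Rightarrow> nat \<Rightarrow> 'a list set" where
  "N3v ed T T' i = {x \<in> N3 T T'. typeV ed T' i x \<and>
     (\<forall>a. x @ [a] \<in> Substr T' \<longrightarrow>
        (\<exists>j. crossing_occ ed T' i x j \<and> j + length x \<le> length T' \<and>
             T' ! (j + length x - 1) = a))}"

definition N3nv :: "edit_kind \<Rightarrow> 'a list \<Rightarrow> 'a list \<Rightarrow> nat \<Rightarrow> 'a list set" where
  "N3nv ed T T' i = N3 T T' - N3v ed T T' i"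

end

theory Submission
  imports Defs
begin

lemma occ_at_iff: "occ_at T' x j \<longleftrightarrow> (\<exists>u v. T' = u @ x @ v \<and> j = Suc (length u))"
proof
  assume h: "occ_at T' x j"
  hence j: "1 \<le> j" "j + length x - 1 \<le> length T'" "take (length x) (drop (j - 1) T') = x"
    by (auto simp: occ_at_def)
  let ?u = "take (j - 1) T'" and ?v = "drop (j - 1 + length x) T'"
  have "T' = ?u @ drop (j - 1) T'" by simp
  also have "drop (j - 1) T' = x @ ?v"
    by (metis append_take_drop_id drop_drop j(3) add.commute)
  finally have "T' = ?u @ x @ ?v" .
  moreover have "j = Suc (length ?u)" using j by auto
  ultimately show "\<exists>u v. T' = u @ x @ v \<and> j = Suc (length u)" by blast
next
  assume "\<exists>u v. T' = u @ x @ v \<and> j = Suc (length u)"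
  then obtain u v where "T' = u @ x @ v" "j = Suc (length u)" by blast
  thus "occ_at T' x j" by (simp add: occ_at_def)
qed

lemma Substr_iff_occ: "x \<in> Substr T \<longleftrightarrow> (\<exists>j. occ_at T x j)"
  by (auto simp: Substr_def occ_at_iff)

lemma Substr_trans: "x \<in> Substr y \<Longrightarrow> y \<in> Substr T \<Longrightarrow> x \<in> Substr T"
  unfolding Substr_def by (auto, metis append.assoc)

lemma take_Substr: "take m T \<in> Substr T"
  unfolding Substr_def by (rule CollectI, rule exI[of _ "[]"], rule exI[of _ "drop m T"]) simp

lemma drop_Substr: "drop m T \<in> Substr T"
  unfolding Substr_def by (rule CollectI, rule exI[of _ "take m T"], rule exI[of _ "[]"]) simp

lemma edit_parts:
  assumes "single_edit ed T T' i"
  shows "take (i - 1) T' \<in> Substr T" "drop i T' \<in> Substr T"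
proof -
  have "take (i - 1) T' \<in> Substr T \<and> drop i T' \<in> Substr T"
  proof (cases ed)
    case Insertion
    then show ?thesis using assms
      by (auto simp: single_edit_def take_Substr drop_Substr)
  next
    case Deletion
    with assms have e: "1 \<le> i" "i \<le> length T" "T' = take (i - 1) T @ drop i T"
      by (auto simp: single_edit_def)
    have "take (i - 1) T' = take (i - 1) T" using e by (simp add: min_def)
    moreover have "drop i T' = drop 1 (drop i T)" using e by (simp add: min_def)
    ultimately show ?thesis by (metis take_Substr drop_Substr Substr_trans)
  next
    case Substitution
    with assms have e: "1 \<le> i" "i \<le> length T" "length T' = length T"
      "\<forall>j. 1 \<le> j \<and> j \<le> length T \<and> j \<noteq> i \<longrightarrow> T' ! (j - 1) = T ! (j - 1)"
      by (auto simp: single_edit_def)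
    have nth: "T' ! p = T ! p" if "p < length T" "p \<noteq> i - 1" for p
      using e(4)[rule_format, of "Suc p"] that e(1) by auto
    have "take (i - 1) T' = take (i - 1) T"
      by (rule nth_equalityI) (use e nth in auto)
    moreover have "drop i T' = drop i T"
      by (rule nth_equalityI) (use e nth in auto)
    ultimately show ?thesis by (metis take_Substr drop_Substr)
  qed
  thus "take (i - 1) T' \<in> Substr T" "drop i T' \<in> Substr T" by auto
qed

lemma noncross:
  assumes "single_edit ed T T' i" "x \<noteq> []" "occ_at T' x j" "\<not> crossing_occ ed T' i x j"
  shows "x \<in> Substr T"
proof -
  obtain u v where uv: "T' = u @ x @ v" "j = Suc (length u)" using assms(3) occ_at_iff by metis
  have i1: "1 \<le> i" using assms(1) by (cases ed) (auto simp: single_edit_def)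
  have "length u + length x \<le> i - 1 \<or> length u \<ge> i"
    using assms(2-4) uv i1 by (cases "ed = Deletion") (auto simp: crossing_occ_def Let_def)
  thus ?thesis
  proof
    assume h: "length u + length x \<le> i - 1"
    have "take (i - 1) T' = u @ x @ take (i - 1 - length u - length x) v"
      using uv h by simp
    hence "x \<in> Substr (take (i - 1) T')" unfolding Substr_def by blast
    thus ?thesis using edit_parts(1)[OF assms(1)] Substr_trans by blast
  next
    assume h: "length u \<ge> i"
    have "drop i T' = drop i u @ x @ v" using uv h by simp
    hence "x \<in> Substr (drop i T')" unfolding Substr_def by blast
    thus ?thesis using edit_parts(2)[OF assms(1)] Substr_trans by blast
  qed
qed

lemma empty_Substr: "[] \<in> Substr T"
  unfolding Substr_def by auto

theorem lemma1:
  fixes T T' x :: "'a list" and i :: nat and ed :: edit_kind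
  assumes "single_edit ed T T' i"
    and "x \<in> N1 T T' \<union> N3nv ed T T' i"
  shows "x \<in> Substr T"
proof (rule ccontr)
  assume nx: "x \<notin> Substr T"
  hence xne: "x \<noteq> []" using empty_Substr by metis
  have allc: "crossing_occ ed T' i x j" if "occ_at T' x j" for j
    using noncross[OF assms(1) xne that] nx by blast
  have "x \<notin> N1 T T'" using nx by (auto simp: N1_def RightM_def)
  hence x3: "x \<in> N3 T T'" "x \<notin> N3v ed T T' i" using assms(2) by (auto simp: N3nv_def)
  hence xM: "x \<in> MaxRep T'" "x \<noteq> T'" by (auto simp: N3_def NewM_def)
  have two: "\<exists>j1 j2. j1 \<noteq> j2 \<and> occ_at T' x j1 \<and> occ_at T' x j2"
  proof -
    have R: "x \<in> Suffix T' \<or> (\<exists>a b. a \<noteq> b \<and> x @ [a] \<in> Substr T' \<and> x @ [b] \<in> Substr T')"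
      and L: "x \<in> Prefix T' \<or> (\<exists>a b. a \<noteq> b \<and> a # x \<in> Substr T' \<and> b # x \<in> Substr T')"
      using xM by (auto simp: MaxRep_def RightM_def LeftM_def)
    show ?thesis
    proof (cases "\<exists>a b. a \<noteq> b \<and> x @ [a] \<in> Substr T' \<and> x @ [b] \<in> Substr T'")
      case True
      then obtain a b u1 v1 u2 v2 where ab: "a \<noteq> b" "T' = u1 @ (x @ [a]) @ v1"
        "T' = u2 @ (x @ [b]) @ v2" unfolding Substr_def by blast
      have "length u1 \<noteq> length u2"
      proof
        assume "length u1 = length u2"
        hence "T' ! (length u1 + length x) = a" "T' ! (length u1 + length x) = b"
          using ab by (simp_all add: nth_append)
        thus False using ab by simp
      qed
      moreover have "occ_at T' x (Suc (length u1))" "occ_at T' x (Suc (length u2))"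
        using ab occ_at_iff by (metis append.assoc append_Cons append_Nil)+
      ultimately show ?thesis by (metis Suc_inject)
    next
      case F1: False
      hence suf: "x \<in> Suffix T'" using R by blast
      show ?thesis
      proof (cases "\<exists>a b. a \<noteq> b \<and> a # x \<in> Substr T' \<and> b # x \<in> Substr T'")
        case True
        then obtain a b u1 v1 u2 v2 where ab: "a \<noteq> b" "T' = u1 @ (a # x) @ v1"
          "T' = u2 @ (b # x) @ v2" unfolding Substr_def by blast
        have "length u1 \<noteq> length u2"
        proof
          assume "length u1 = length u2"
          hence "T' ! (length u1) = a" "T' ! (length u1) = b"
            using ab by (simp_all add: nth_append)
          thus False using ab by simp
        qed
        moreover have "occ_at T' x (Suc (length (u1 @ [a])))" "occ_at T' x (Suc (length (u2 @ [b])))"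
          using ab occ_at_iff by (metis append.assoc append_Cons append_Nil)+
        ultimately show ?thesis by (metis Suc_inject length_append_singleton)
      next
        case False
        hence pre: "x \<in> Prefix T'" using L by blast
        then obtain v where v: "T' = x @ v" by (auto simp: Prefix_def)
        obtain u where u: "T' = u @ x" using suf by (auto simp: Suffix_def)
        have "u \<noteq> []" using u xM by auto
        moreover have "occ_at T' x (Suc (length ([]::'a list)))" "occ_at T' x (Suc (length u))"
          using u v occ_at_iff by (metis append_Nil append_Nil2)+
        ultimately show ?thesis by (metis Suc_inject length_0_conv)
      qed
    qed
  qed
  have "typeV ed T' i x" unfolding typeV_def using two allc xM by blast
  moreover have "\<forall>a. x @ [a] \<in> Substr T' \<longrightarrow>
        (\<exists>j. crossing_occ ed T' i x j \<and> j + length x \<le> length T' \<and>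
             T' ! (j + length x - 1) = a)"
  proof (intro allI impI)
    fix a assume "x @ [a] \<in> Substr T'"
    then obtain u v where uv: "T' = u @ (x @ [a]) @ v" unfolding Substr_def by blast
    have "occ_at T' x (Suc (length u))" using uv occ_at_iff by (metis append.assoc append_Cons append_Nil)
    moreover have "Suc (length u) + length x \<le> length T'" using uv by simp
    moreover have "T' ! (Suc (length u) + length x - 1) = a" using uv by (simp add: nth_append)
    ultimately show "\<exists>j. crossing_occ ed T' i x j \<and> j + length x \<le> length T' \<and>
             T' ! (j + length x - 1) = a" using allc by blast
  qed
  ultimately have "x \<in> N3v ed T T' i" using x3 by (simp add: N3v_def)
  thus False using x3 by blast
qed

end
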